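(* For every non-empty index $\mathbf k$, \[\zeta^{s,t,\star}_{\widehat{\mathcal{RS}}}(\mathbf k)=\frac{1}{2\pi i}\Bigl\langle\Phi_{\mathcal{RS}}(X_\infty,X_1),\ (1-e_0s)^{-1}(e_1-e_0)\,\omega(\mathbf k)\,(e_1-e_0)(1-e_0t)^{-1}\Bigr\rangle,\] where $X_\infty=-X_0-X_1$.
   Context: $s,t$ commuting indeterminates, $X_0,X_1$ noncommuting variables. An index is a finite tuple $\mathbf{k}=(k_1,\dots,k_r)$ of positive integers, $\mathrm{dep}(\mathbf k)=r$, $\mathrm{wt}(\mathbf k)=\sum k_i$. $\mathfrak H=\mathbb Q\langle e_0,e_1\rangle$, $e_{\mathbf{k}}=e_1e_0^{k_1-1}\cdots e_1e_0^{k_r-1}$; for non-empty $\mathbf k$, $\omega(\mathbf k)$ is defined by $e_1\omega(\mathbf k)=e_{\mathbf k}$. $Z^{ш}:(\mathfrak H,ш)\to\mathbb R$ is the shuffle-algebra homomorphism with $Z^{ш}(e_{\mathbf k})=(-1)^{\mathrm{dep}}\zeta(\mathbf k)$ for admissible $\mathbf k$ (empty or $k_r\ge2$) and $Z^{ш}(e_0)=Z^{ш}(e_1)=0$. $\Phi_{\mathrm{KZ}}(X_0,X_1)=\sum_{n\ge0}\sum_{a_i\in\{0,1\}}Z^{ш}(e_{a_1}\cdots e_{a_n})X_{a_n}\cdots X_{a_1}$; $\Phi_{\mathcal{RS}}(X_0,X_1)=\exp(\pi iX_0/2)\Phi_{\mathrm{KZ}}(X_1,X_0)\exp(2\pi iX_1)\Phi_{\mathrm{KZ}}(X_0,X_1)\exp(\pi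 iX_0/2)$, and $\Phi_{\mathcal{RS}}(A,B)$ denotes substitution $X_0\mapsto A,X_1\mapsto B$. Pairing: for $\Phi=\sum_Wc_WW$ over words $W$ in $X_0,X_1$, $\langle\Phi,e_{a_1}\cdots e_{a_n}\rangle=c_{X_{a_1}\cdots X_{a_n}}$, extended linearly and coefficientwise to $\mathfrak H[[s,t]]$. For non-empty $\mathbf k$, $\zeta^{s,t}_{\widehat{\mathcal{RS}}}(\mathbf k)=\frac{(-1)^{\mathrm{wt}(\mathbf k)+\mathrm{dep}(\mathbf k)}}{2\pi i}\langle\Phi_{\mathcal{RS}}(X_0,X_1),(1+e_0s)^{-1}e_1\omega(\mathbf k)e_1(1+e_0t)^{-1}\rangle$. $\mathbf l\preceq\mathbf k$ means $\mathbf l$ is obtained from $(k_1\circ\cdots\circ k_r)$ by replacing each $\circ$ by a comma or a plus sign, and $\zeta^{s,t,\star}_{\widehat{\mathcal{RS}}}(\mathbf k)=\sum_{\mathbf l\preceq\mathbf k}\zeta^{s,t}_{\widehat{\mathcal{RS}}}(\mathbf l)$. *)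

theory Defs
  imports "HOL-Analysis.Analysis"
begin

(* L0 stands for X_0 / e_0, L1 for X_1 / e_1 *)
datatype letter = L0 | L1

type_synonym word = "letter list"

(* A noncommutative formal power series in X_0, X_1 (or an element of H, when finitely
   supported) is given by its coefficient function on words. *)
type_synonym ncs = "word \<Rightarrow> complex"

definition ncs_zero :: ncs where "ncs_zero = (\<lambda>w. 0)"
definition ncs_one :: ncs where "ncs_one = (\<lambda>w. if w = [] then 1 else 0)"
definition ncs_mono :: "word \<Rightarrow> ncs" where "ncs_mono u = (\<lambda>w. if w = u then 1 else 0)"
definition ncs_var :: "letter \<Rightarrow> ncs" where "ncs_var a = ncs_mono [a]"
definition ncs_add :: "ncs \<Rightarrow> ncs \<Rightarrow> ncs" where "ncs_add f g = (\<lambda>w. f w + g w)"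
definition ncs_smult :: "complex \<Rightarrow> ncs \<Rightarrow> ncs" where "ncs_smult c f = (\<lambda>w. c * f w)"

definition ncs_mult :: "ncs \<Rightarrow> ncs \<Rightarrow> ncs" where
  "ncs_mult f g = (\<lambda>w. \<Sum>i\<le>length w. f (take i w) * g (drop i w))"

definition ncs_prod :: "ncs list \<Rightarrow> ncs" where
  "ncs_prod fs = foldr ncs_mult fs ncs_one"

definition ncs_exp :: "complex \<Rightarrow> letter \<Rightarrow> ncs" where
  "ncs_exp c a = (\<lambda>w. if w = replicate (length w) a
                        then c ^ length w / of_nat (fact (length w)) else 0)"

(* Substitution Phi(S L0, S L1), X_a \<mapsto> S a; meaningful for series S a with
   zero constant term (only words u of length \<le> length w contribute). *)
definition ncs_subst :: "ncs \<Rightarrow> (letter \<Rightarrow> ncs) \<Rightarrow> ncs" where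
  "ncs_subst \<Phi> S = (\<lambda>w. \<Sum>n\<le>length w.
      sum_list (map (\<lambda>u. \<Phi> u * ncs_prod (map S u) w) (List.n_lists n [L0, L1])))"

definition mzv :: "nat list \<Rightarrow> real" where
  "mzv k = (\<Sum>\<^sub>\<infinity> ns \<in> {ns :: nat list. length ns = length k \<and> sorted_wrt (<) ns \<and> (\<forall>n\<in>set ns. 0 < n)}.
              \<Prod>i<length k. 1 / real (ns ! i) ^ (k ! i))"

definition is_index :: "nat list \<Rightarrow> bool" where
  "is_index k \<longleftrightarrow> (\<forall>x\<in>set k. 0 < x)"

definition admissible :: "nat list \<Rightarrow> bool" where
  "admissible k \<longleftrightarrow> is_index k \<and> (k = [] \<or> 2 \<le> last k)"

definition e_idx :: "nat list \<Rightarrow> word" where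
  "e_idx k = concat (map (\<lambda>ki. L1 # replicate (ki - 1) L0) k)"

(* omega(k), defined by e_1 omega(k) = e_k (k non-empty) *)
definition omega :: "nat list \<Rightarrow> word" where
  "omega k = tl (e_idx k)"

fun shuffle_list :: "'a list \<Rightarrow> 'a list \<Rightarrow> 'a list list" where
  "shuffle_list [] ys = [ys]"
| "shuffle_list xs [] = [xs]"
| "shuffle_list (x # xs) (y # ys) =
     map ((#) x) (shuffle_list xs (y # ys)) @ map ((#) y) (shuffle_list (x # xs) ys)"

(* Z^sh as a linear map on H, given by its values on words: shuffle homomorphism
   with prescribed values on admissible words and Z(e_0) = Z(e_1) = 0. *)
definition Zsh_spec :: "(word \<Rightarrow> real) \<Rightarrow> bool" where
  "Zsh_spec Z \<longleftrightarrow>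
     (\<forall>u v. Z u * Z v = sum_list (map Z (shuffle_list u v))) \<and>
     Z [] = 1 \<and> Z [L0] = 0 \<and> Z [L1] = 0 \<and>
     (\<forall>k. admissible k \<longrightarrow> Z (e_idx k) = (-1) ^ length k * mzv k)"

definition Zsh :: "word \<Rightarrow> real" where
  "Zsh = (THE Z. Zsh_spec Z)"

(* Phi_KZ(X_0,X_1) = sum Z(e_{a_1}...e_{a_n}) X_{a_n}...X_{a_1} *)
definition PhiKZ :: ncs where
  "PhiKZ = (\<lambda>w. complex_of_real (Zsh (rev w)))"

definition PhiRS :: ncs where
  "PhiRS = ncs_prod
     [ ncs_exp (pi * \<i> / 2) L0,
       ncs_subst PhiKZ (\<lambda>a. if a = L0 then ncs_var L1 else ncs_var L0),
       ncs_exp (2 * pi * \<i>) L1,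
       PhiKZ,
       ncs_exp (pi * \<i> / 2) L0 ]"

definition PhiRS_at :: "ncs \<Rightarrow> ncs \<Rightarrow> ncs" where
  "PhiRS_at A B = ncs_subst PhiRS (\<lambda>a. if a = L0 then A else B)"

definition Xinf :: ncs where
  "Xinf = ncs_smult (-1) (ncs_add (ncs_var L0) (ncs_var L1))"

(* element of H[[s,t]]: coefficient of s^m t^n is F m n \<in> H *)
type_synonym hst = "nat \<Rightarrow> nat \<Rightarrow> ncs"

definition hst_const :: "ncs \<Rightarrow> hst" where
  "hst_const h = (\<lambda>m n. if m = 0 \<and> n = 0 then h else ncs_zero)"

definition hst_mult :: "hst \<Rightarrow> hst \<Rightarrow> hst" where
  "hst_mult F G = (\<lambda>m n w. \<Sum>i\<le>m. \<Sum>j\<le>n. ncs_mult (F i j) (G (m - i) (n - j)) w)"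

(* pairing <Phi, h> for h \<in> H (finitely supported) *)
definition pair :: "ncs \<Rightarrow> ncs \<Rightarrow> complex" where
  "pair \<Phi> h = (\<Sum>w\<in>{w. h w \<noteq> 0}. \<Phi> w * h w)"

definition pair_st :: "ncs \<Rightarrow> hst \<Rightarrow> nat \<Rightarrow> nat \<Rightarrow> complex" where
  "pair_st \<Phi> F = (\<lambda>m n. pair \<Phi> (F m n))"

(* (1 + c e_0 s)^(-1) = sum_m (-c)^m e_0^m s^m  and the analogue in t *)
definition inv_s :: "complex \<Rightarrow> hst" where
  "inv_s c = (\<lambda>m n. if n = 0 then ncs_smult ((- c) ^ m) (ncs_mono (replicate m L0)) else ncs_zero)"

definition inv_t :: "complex \<Rightarrow> hst" where
  "inv_t c = (\<lambda>m n. if m = 0 then ncs_smult ((- c) ^ n) (ncs_mono (replicate n L0)) else ncs_zero)"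

definition zeta_RS_st :: "nat list \<Rightarrow> nat \<Rightarrow> nat \<Rightarrow> complex" where
  "zeta_RS_st k = (\<lambda>m n.
     (-1) ^ (sum_list k + length k) / (2 * pi * \<i>) *
     pair_st PhiRS
       (hst_mult (hst_mult (inv_s 1) (hst_const (ncs_mono ([L1] @ omega k @ [L1])))) (inv_t 1)) m n)"

(* all l \<preceq> k : replace each separator by a comma or a plus sign *)
fun coarsenings :: "nat list \<Rightarrow> nat list list" where
  "coarsenings [] = [[]]"
| "coarsenings [a] = [[a]]"
| "coarsenings (a # b # ks) =
     map ((#) a) (coarsenings (b # ks)) @ coarsenings ((a + b) # ks)"

definition zeta_RS_star :: "nat list \<Rightarrow> nat \<Rightarrow> nat \<Rightarrow> complex" where
  "zeta_RS_star k = (\<lambda>m n. sum_list (map (\<lambda>l. zeta_RS_st l m n) (coarsenings k)))"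

end

theory Submission imports Defs begin

type_synonym fsum = "(complex \<times> word) list"

definition toN :: "fsum \<Rightarrow> ncs" where
  "toN xs = (\<lambda>w. sum_list (map (\<lambda>(c,u). if u = w then c else 0) xs))"

definition ev :: "(word \<Rightarrow> complex) \<Rightarrow> fsum \<Rightarrow> complex" where
  "ev f xs = sum_list (map (\<lambda>(c,u). c * f u) xs)"

definition lmul :: "fsum \<Rightarrow> fsum \<Rightarrow> fsum" where
  "lmul xs ys = concat (map (\<lambda>(c,u). map (\<lambda>(d,v). (c*d, u@v)) ys) xs)"

fun sig :: "word \<Rightarrow> fsum" where
  "sig [] = [(1,[])]"
| "sig (L0#w) = map (\<lambda>(c,u). (-c, L0#u)) (sig w)"
| "sig (L1#w) = map (\<lambda>(c,u). (c, L1#u)) (sig w) @ map (\<lambda>(c,u). (-c, L0#u)) (sig w)"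

lemma ev_Nil[simp]: "ev f [] = 0" by (simp add: ev_def)
lemma ev_Cons[simp]: "ev f ((c,u)#xs) = c * f u + ev f xs" by (simp add: ev_def)
lemma ev_append[simp]: "ev f (xs @ ys) = ev f xs + ev f ys" by (simp add: ev_def)

lemma ev_map_neg: "ev f (map (\<lambda>(c,u). (-c, a#u)) xs) = - ev (\<lambda>u. f (a#u)) xs"
  by (induction xs) auto
lemma ev_map_pos: "ev f (map (\<lambda>(c,u). (c, a#u)) xs) = ev (\<lambda>u. f (a#u)) xs"
  by (induction xs) auto

lemma ev_sig_L0[simp]: "ev f (sig (L0#w)) = - ev (\<lambda>u. f (L0#u)) (sig w)"
  by (simp add: ev_map_neg)
lemma ev_sig_L1[simp]: "ev f (sig (L1#w)) = ev (\<lambda>u. f (L1#u)) (sig w) - ev (\<lambda>u. f (L0#u)) (sig w)"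
  by (simp add: ev_map_neg ev_map_pos)

declare sig.simps(2,3)[simp del]

lemma ev_add: "ev (\<lambda>u. g u + h u) xs = ev g xs + ev h xs"
  by (induction xs) (auto simp: algebra_simps)
lemma ev_diff: "ev (\<lambda>u. g u - h u) xs = ev g xs - ev h xs"
  by (induction xs) (auto simp: algebra_simps)
lemma ev_uminus: "ev (\<lambda>u. - g u) xs = - ev g xs"
  by (induction xs) (auto simp: algebra_simps)
lemma ev_cmult: "ev (\<lambda>u. c * g u) xs = c * ev g xs"
  by (induction xs) (auto simp: algebra_simps)
lemma ev_cong: "(\<And>u. g u = h u) \<Longrightarrow> ev g xs = ev h xs" by (metis ext)

lemma ev_sig_append: "ev f (sig (u @ v)) = ev (\<lambda>x. ev (\<lambda>y. f (x @ y)) (sig v)) (sig u)"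
proof (induction u arbitrary: f)
  case Nil then show ?case by simp
next
  case (Cons a u)
  show ?case by (cases a) (simp_all add: Cons.IH)
qed

lemma ev_sig_rep0: "ev f (sig (replicate j L0)) = (-1)^j * f (replicate j L0)"
  by (induction j arbitrary: f) auto

lemma ev_lmul: "ev f (lmul xs ys) = ev (\<lambda>u. ev (\<lambda>v. f (u @ v)) ys) xs"
proof (induction xs)
  case Nil then show ?case by (simp add: lmul_def)
next
  case (Cons p xs)
  obtain c u where p: "p = (c,u)" by fastforce
  have "ev f (map (\<lambda>(d,v). (c*d, u@v)) ys) = c * ev (\<lambda>v. f (u @ v)) ys"
    by (induction ys) (auto simp: algebra_simps)
  then show ?case using Cons by (simp add: lmul_def p)
qed

lemma toN_Nil[simp]: "toN [] = ncs_zero" by (simp add: toN_def ncs_zero_def)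

lemma pair_sum_F:
  assumes "finite F" "set (map snd xs) \<subseteq> F"
  shows "(\<Sum>w\<in>F. \<Psi> w * toN xs w) = ev \<Psi> xs"
  using assms(2)
proof (induction xs)
  case Nil then show ?case by (simp add: toN_def)
next
  case (Cons p xs)
  obtain c u where p: "p = (c,u)" by fastforce
  have uF: "u \<in> F" using Cons.prems p by auto
  have "(\<Sum>w\<in>F. \<Psi> w * toN (p#xs) w) = (\<Sum>w\<in>F. (if u = w then c * \<Psi> w else 0) + \<Psi> w * toN xs w)"
    by (rule sum.cong) (auto simp: toN_def p algebra_simps)
  also have "\<dots> = c * \<Psi> u + ev \<Psi> xs"
    using Cons uF assms(1) by (simp add: sum.distrib)
  finally show ?case by (simp add: p)
qed

lemma pair_toN: "pair \<Psi> (toN xs) = ev \<Psi> xs"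
proof -
  let ?F = "set (map snd xs)"
  have sub: "{w. toN xs w \<noteq> 0} \<subseteq> ?F"
  proof
    fix w assume "w \<in> {w. toN xs w \<noteq> 0}"
    then have "sum_list (map (\<lambda>(c,u). if u = w then c else 0) xs) \<noteq> 0" by (simp add: toN_def)
    then show "w \<in> ?F"
    proof (induction xs)
      case Nil then show ?case by simp
    next
      case (Cons p xs) then show ?case by (cases p) (auto split: if_splits)
    qed
  qed
  have "pair \<Psi> (toN xs) = (\<Sum>w\<in>?F. \<Psi> w * toN xs w)"
    unfolding pair_def by (rule sum.mono_neutral_left) (use sub in auto)
  also have "\<dots> = ev \<Psi> xs" by (rule pair_sum_F) auto
  finally show ?thesis .
qed

lemma toN_Cons: "toN ((c,u)#xs) = (\<lambda>w. (if u = w then c else 0) + toN xs w)"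
  by (simp add: toN_def)

lemma mono_toN: "ncs_mono u = toN [(1,u)]"
  by (auto simp: ncs_mono_def toN_def)
lemma var_toN: "ncs_var a = toN [(1,[a])]"
  by (simp add: ncs_var_def mono_toN)
lemma one_toN: "ncs_one = toN [(1,[])]"
  by (auto simp: ncs_one_def toN_def)
lemma add_toN: "ncs_add (toN xs) (toN ys) = toN (xs @ ys)"
  by (simp add: ncs_add_def toN_def)
lemma smult_toN: "ncs_smult a (toN xs) = toN (map (\<lambda>(d,u). (a*d,u)) xs)"
proof -
  have "\<And>w. a * toN xs w = toN (map (\<lambda>(d,u). (a*d,u)) xs) w"
    by (induction xs) (auto simp: toN_def algebra_simps)
  then show ?thesis by (auto simp: ncs_smult_def)
qed

lemma mult_mono_left:
  "ncs_mult (ncs_mono u) g w = (if length u \<le> length w \<and> take (length u) w = u then g (drop (length u) w) else 0)"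
proof -
  have "ncs_mult (ncs_mono u) g w = (\<Sum>i\<le>length w. if i = length u then (if take i w = u then g (drop i w) else 0) else 0)"
    unfolding ncs_mult_def ncs_mono_def
    by (rule sum.cong) auto
  also have "\<dots> = (if length u \<le> length w \<and> take (length u) w = u then g (drop (length u) w) else 0)"
    by (simp add: sum.delta')
  finally show ?thesis .
qed

lemma mult_toN_left:
  "ncs_mult (toN xs) g w = sum_list (map (\<lambda>(c,u). c * ncs_mult (ncs_mono u) g w) xs)"
proof (induction xs)
  case Nil then show ?case by (simp add: ncs_mult_def toN_def)
next
  case (Cons p xs)
  obtain c u where p: "p = (c,u)" by fastforce
  have "ncs_mult (toN (p#xs)) g w = (\<Sum>i\<le>length w. c * (ncs_mono u (take i w) * g (drop i w)) + toN xs (take i w) * g (drop i w))"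
    unfolding ncs_mult_def by (rule sum.cong) (auto simp: toN_Cons ncs_mono_def p algebra_simps)
  also have "\<dots> = c * ncs_mult (ncs_mono u) g w + ncs_mult (toN xs) g w"
    by (simp add: sum.distrib sum_distrib_left ncs_mult_def)
  finally have "ncs_mult (toN (p#xs)) g w = c * ncs_mult (ncs_mono u) g w + ncs_mult (toN xs) g w" .
  then show ?case using Cons by (simp add: p)
qed

lemma mult_mono_toN: "ncs_mult (ncs_mono u) (toN ys) w = toN (map (\<lambda>(d,v). (d, u@v)) ys) w"
proof (induction ys)
  case Nil then show ?case by (simp add: mult_mono_left toN_def)
next
  case (Cons p ys)
  obtain d v where p: "p = (d,v)" by fastforce
  have e: "(u @ v = w) = (length u \<le> length w \<and> take (length u) w = u \<and> v = drop (length u) w)"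
    by (metis append_eq_conv_conj le_add1 length_append)
  show ?case using Cons unfolding p
    by (auto simp: mult_mono_left toN_Cons e)
qed

lemma mult_toN: "ncs_mult (toN xs) (toN ys) = toN (lmul xs ys)"
proof
  fix w
  show "ncs_mult (toN xs) (toN ys) w = toN (lmul xs ys) w"
  proof (induction xs)
    case Nil then show ?case by (simp add: mult_toN_left lmul_def toN_def ncs_mult_def)
  next
    case (Cons p xs)
    obtain c u where p: "p = (c,u)" by fastforce
    have h: "c * toN (map (\<lambda>(d,v). (d, u@v)) ys) w = toN (map (\<lambda>(d,v). (c*d, u@v)) ys) w"
      by (induction ys) (auto simp: toN_def algebra_simps)
    have "toN (lmul (p#xs) ys) w = toN (map (\<lambda>(d,v). (c*d, u@v)) ys) w + toN (lmul xs ys) w"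
      by (simp add: lmul_def p toN_def)
    then show ?case using Cons h
      by (simp add: mult_toN_left p mult_mono_toN)
  qed
qed

definition SS :: "letter \<Rightarrow> ncs" where
  "SS = (\<lambda>a. if a = L0 then Xinf else ncs_var L1)"

definition sc :: "letter \<Rightarrow> letter \<Rightarrow> complex" where
  "sc a b = SS a [b]"

lemma sc_simps[simp]: "sc L0 L0 = -1" "sc L0 L1 = -1" "sc L1 L0 = 0" "sc L1 L1 = 1"
  by (simp_all add: sc_def SS_def Xinf_def ncs_smult_def ncs_add_def ncs_var_def ncs_mono_def)

lemma SS_deg1: "length v \<noteq> 1 \<Longrightarrow> SS a v = 0"
  by (auto simp: SS_def Xinf_def ncs_smult_def ncs_add_def ncs_var_def ncs_mono_def)

lemma mult_deg1:
  assumes "\<And>v. length v \<noteq> 1 \<Longrightarrow> f v = 0"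
  shows "ncs_mult f g w = (case w of [] \<Rightarrow> 0 | b#w' \<Rightarrow> f [b] * g w')"
proof -
  have "ncs_mult f g w = (\<Sum>i\<le>length w. if i = 1 then f (take 1 w) * g (drop 1 w) else 0)"
    unfolding ncs_mult_def by (rule sum.cong) (auto simp: assms)
  also have "\<dots> = (case w of [] \<Rightarrow> 0 | b#w' \<Rightarrow> f [b] * g w')"
  proof (cases w)
    case Nil then show ?thesis by simp
  next
    case (Cons b w')
    have "(\<Sum>i\<le>length w. if i = 1 then f (take 1 w) * g (drop 1 w) else 0) = f (take 1 w) * g (drop 1 w)"
      using sum.delta[of "{..length w}" 1 "\<lambda>_. f (take 1 w) * g (drop 1 w)"] by (simp add: Cons)
    then show ?thesis by (simp add: Cons)
  qed
  finally show ?thesis .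
qed

lemma prod_SS:
  "ncs_prod (map SS u) w = (if length u = length w then prod_list (map2 sc u w) else 0)"
proof (induction u arbitrary: w)
  case Nil then show ?case by (simp add: ncs_prod_def ncs_one_def)
next
  case (Cons a u)
  have "ncs_prod (map SS (a#u)) w = ncs_mult (SS a) (ncs_prod (map SS u)) w"
    by (simp add: ncs_prod_def)
  also have "\<dots> = (case w of [] \<Rightarrow> 0 | b#w' \<Rightarrow> SS a [b] * ncs_prod (map SS u) w')"
    by (rule mult_deg1) (simp add: SS_deg1)
  finally show ?case using Cons by (cases w) (auto simp: sc_def[symmetric])
qed

lemma sum_list_concat': "sum_list (concat xss) = sum_list (map sum_list xss)"
  by (induction xss) auto

lemma T_sig:
  "sum_list (map (\<lambda>u. f u * prod_list (map2 sc u w)) (List.n_lists (length w) [L0,L1])) = ev f (sig w)"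
proof (induction w arbitrary: f)
  case Nil then show ?case by simp
next
  case (Cons a w)
  have "sum_list (map (\<lambda>u. f u * prod_list (map2 sc u (a#w))) (List.n_lists (length (a#w)) [L0,L1]))
     = sum_list (map (\<lambda>ys. (f (L0#ys) * sc L0 a + f (L1#ys) * sc L1 a) * prod_list (map2 sc ys w)) (List.n_lists (length w) [L0,L1]))"
    by (simp add: map_concat sum_list_concat' comp_def algebra_simps)
  also have "\<dots> = ev (\<lambda>ys. f (L0#ys) * sc L0 a + f (L1#ys) * sc L1 a) (sig w)"
    by (rule Cons.IH)
  also have "\<dots> = ev f (sig (a#w))"
    by (cases a) (simp_all add: ev_uminus ev_diff[symmetric] ev_add[symmetric] algebra_simps)
  finally show ?case .
qed

lemma subst_sig: "ncs_subst \<Phi> SS w = ev \<Phi> (sig w)"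
proof -
  have "ncs_subst \<Phi> SS w = (\<Sum>n\<le>length w. if n = length w then
        sum_list (map (\<lambda>u. \<Phi> u * prod_list (map2 sc u w)) (List.n_lists (length w) [L0,L1])) else 0)"
    unfolding ncs_subst_def
  proof (rule sum.cong)
    fix n assume "n \<in> {..length w}"
    have "map (\<lambda>u. \<Phi> u * ncs_prod (map SS u) w) (List.n_lists n [L0, L1])
        = map (\<lambda>u. if n = length w then \<Phi> u * prod_list (map2 sc u w) else 0) (List.n_lists n [L0, L1])"
      by (rule map_cong[OF refl]) (simp add: prod_SS length_n_lists_elem)
    note m = this
    show "sum_list (map (\<lambda>u. \<Phi> u * ncs_prod (map SS u) w) (List.n_lists n [L0, L1])) =
        (if n = length w then sum_list (map (\<lambda>u. \<Phi> u * prod_list (map2 sc u w)) (List.n_lists (length w) [L0,L1])) else 0)"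
      unfolding m by (simp add: sum_list_0)
  qed simp
  also have "\<dots> = ev \<Phi> (sig w)" by (simp add: T_sig)
  finally show ?thesis .
qed

lemma e_idx_ne: "l \<noteq> [] \<Longrightarrow> e_idx l = L1 # omega l"
  by (cases l) (auto simp: omega_def e_idx_def)

lemma omega_single: "omega [a] = replicate (a-1) L0"
  by (simp add: omega_def e_idx_def)

lemma omega_Cons: "l \<noteq> [] \<Longrightarrow> omega (a#l) = replicate (a-1) L0 @ L1 # omega l"
proof -
  assume l: "l \<noteq> []"
  have "e_idx (a#l) = L1 # replicate (a-1) L0 @ e_idx l" by (simp add: e_idx_def)
  then show ?thesis unfolding omega_def[of "a#l"] by (simp add: e_idx_ne[OF l])
qed

lemma omega_addhd: "1 \<le> y \<Longrightarrow> omega ((a+y)#l) = replicate a L0 @ omega (y#l)"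
  by (simp add: omega_def e_idx_def replicate_add[symmetric])

definition addhd :: "nat \<Rightarrow> nat list \<Rightarrow> nat list" where
  "addhd c l = (case l of [] \<Rightarrow> [] | y#l' \<Rightarrow> (c+y)#l')"

lemma coars_add: "coarsenings ((c+x)#ks) = map (addhd c) (coarsenings (x#ks))"
proof (induction ks arbitrary: x)
  case Nil then show ?case by (simp add: addhd_def)
next
  case (Cons y ks)
  have "coarsenings ((c+x)#y#ks) = map ((#) (c+x)) (coarsenings (y#ks)) @ coarsenings ((c+(x+y))#ks)"
    by (simp add: add.assoc)
  also have "\<dots> = map (addhd c) (coarsenings (x#y#ks))"
    using Cons.IH[of "x+y"] by (simp add: addhd_def comp_def)
  finally show ?case .
qed

lemma coars_hd: "l \<in> set (coarsenings (x#ks)) \<Longrightarrow> \<exists>y l'. l = y#l' \<and> x \<le> y"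
proof (induction ks arbitrary: x l)
  case Nil then show ?case by simp
next
  case (Cons z ks)
  from Cons.prems have "l \<in> (#) x ` set (coarsenings (z#ks)) \<or> l \<in> set (coarsenings ((x+z)#ks))"
    by simp
  then show ?case
  proof
    assume "l \<in> set (coarsenings ((x+z)#ks))"
    from Cons.IH[OF this] show ?thesis by force
  qed auto
qed

definition sgn_l :: "nat list \<Rightarrow> complex" where
  "sgn_l l = (-1) ^ (sum_list l + length l)"

lemma sum_list_negf': "sum_list (map (\<lambda>x. - f x) xs) = - sum_list (map f xs)"
  for f :: "'a \<Rightarrow> complex" by (induction xs) auto

lemma core:
  assumes "is_index (a#ks)"
  shows "ev g (sig (omega (a#ks))) = sum_list (map (\<lambda>l. sgn_l l * g (omega l)) (coarsenings (a#ks)))"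
  using assms
proof (induction ks arbitrary: a g)
  case Nil
  then have a1: "1 \<le> a" by (simp add: is_index_def)
  obtain a' where a': "a = Suc a'" using a1 by (cases a) auto
  have "(-1::complex)^(a-1) = (-1)^(a+1)"
    by (simp add: a')
  then show ?case by (simp add: omega_single ev_sig_rep0 sgn_l_def)
next
  case (Cons b ks)
  have a1: "1 \<le> a" and b1: "1 \<le> b" and idx: "is_index (b#ks)"
    using Cons.prems by (auto simp: is_index_def)
  let ?C = "coarsenings (b#ks)"
  let ?r = "replicate (a-1) L0"
  obtain a' where a': "a = Suc a'" using a1 by (cases a) auto
  have rep: "\<And>u. ?r @ L0 # u = replicate a L0 @ u"
    by (simp add: a' replicate_app_Cons_same)
  have "ev g (sig (omega (a#b#ks))) = (-1)^(a-1) *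
      (ev (\<lambda>u. g (?r @ L1 # u)) (sig (omega (b#ks))) - ev (\<lambda>u. g (?r @ L0 # u)) (sig (omega (b#ks))))"
    by (simp add: omega_Cons ev_sig_append ev_sig_rep0)
  also have "\<dots> = (-1)^(a-1) *
      (sum_list (map (\<lambda>l. sgn_l l * g (?r @ L1 # omega l)) ?C) - sum_list (map (\<lambda>l. sgn_l l * g (replicate a L0 @ omega l)) ?C))"
    using Cons.IH[OF idx, of "\<lambda>u. g (?r @ L1 # u)"] Cons.IH[OF idx, of "\<lambda>u. g (replicate a L0 @ u)"]
    unfolding rep by simp
  also have "\<dots> = sum_list (map (\<lambda>l. sgn_l l * g (omega l)) (map ((#) a) ?C))
                 + sum_list (map (\<lambda>l. sgn_l l * g (omega l)) (map (addhd a) ?C))"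
  proof -
    have pa: "(-1::complex) ^ a = - ((-1) ^ (a - 1))" by (simp add: a')
    have pa2: "(-1::complex)^(a + 1) = (-1)^(a-1)" using pa by simp
    have e1: "map (\<lambda>l. sgn_l l * g (omega l)) (map ((#) a) ?C) = map (\<lambda>l. (-1)^(a-1) * (sgn_l l * g (?r @ L1 # omega l))) ?C"
      unfolding map_map
    proof (rule map_cong[OF refl])
      fix l assume "l \<in> set ?C"
      then obtain y l' where l: "l = y#l'" using coars_hd by blast
      show "((\<lambda>l. sgn_l l * g (omega l)) \<circ> (#) a) l = (-1)^(a-1) * (sgn_l l * g (?r @ L1 # omega l))"
        by (simp add: a' l omega_Cons sgn_l_def power_add algebra_simps)
    qed
    have e2: "map (\<lambda>l. sgn_l l * g (omega l)) (map (addhd a) ?C) = map (\<lambda>l. - ((-1)^(a-1) * (sgn_l l * g (replicate a L0 @ omega l)))) ?C"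
      unfolding map_map
    proof (rule map_cong[OF refl])
      fix l assume "l \<in> set ?C"
      then obtain y l' where l: "l = y#l'" and "b \<le> y" using coars_hd by blast
      then have y1: "1 \<le> y" using b1 by simp
      show "((\<lambda>l. sgn_l l * g (omega l)) \<circ> addhd a) l = - ((-1)^(a-1) * (sgn_l l * g (replicate a L0 @ omega l)))"
        using omega_addhd[OF y1, of a] by (simp add: a' l addhd_def sgn_l_def power_add algebra_simps)
    qed
    show ?thesis unfolding e1 e2
      unfolding sum_list_negf' sum_list_const_mult by (simp add: algebra_simps)
  qed
  also have "\<dots> = sum_list (map (\<lambda>l. sgn_l l * g (omega l)) (coarsenings (a#b#ks)))"
    by (simp add: coars_add[symmetric])
  finally show ?case .
qed


lemma dsum2:
  fixes i j p q :: nat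
  assumes pq: "p \<le> i" "q \<le> j"
  assumes "\<And>i' j'. i' \<le> i \<Longrightarrow> j' \<le> j \<Longrightarrow> \<not>(i'=p \<and> j'=q) \<Longrightarrow> F i' j' = 0"
  shows "(\<Sum>i'\<le>i. \<Sum>j'\<le>j. F i' j') = (F p q :: complex)"
proof -
  have "(\<Sum>i'\<le>i. \<Sum>j'\<le>j. F i' j') = (\<Sum>i'\<le>i. if i' = p then (\<Sum>j'\<le>j. if j' = q then F p q else 0) else 0)"
  proof (rule sum.cong[OF refl])
    fix i' assume i': "i' \<in> {..i}"
    show "(\<Sum>j'\<le>j. F i' j') = (if i' = p then (\<Sum>j'\<le>j. if j' = q then F p q else 0) else 0)"
    proof (cases "i' = p")
      case True
      have "(\<Sum>j'\<le>j. F i' j') = (\<Sum>j'\<le>j. if j' = q then F p q else 0)"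
      proof (intro sum.cong refl)
        fix x assume "x \<in> {..j}"
        then show "F i' x = (if x = q then F p q else 0)" using assms(3)[of p x] True pq by auto
      qed
      then show ?thesis using True by simp
    next
      case False then show ?thesis using assms i' by (auto intro!: sum.neutral)
    qed
  qed
  also have "\<dots> = F p q" using pq by simp
  finally show ?thesis .
qed

lemma dsum:
  fixes i j :: nat
  assumes "\<And>i' j'. i' \<le> i \<Longrightarrow> j' \<le> j \<Longrightarrow> \<not>(i'=i \<and> j'=j) \<Longrightarrow> F i' j' = 0"
  shows "(\<Sum>i'\<le>i. \<Sum>j'\<le>j. F i' j') = (F i j :: complex)"
  by (rule dsum2) (use assms in auto)

lemma mult_zero_l[simp]: "ncs_mult ncs_zero g = ncs_zero"
  by (simp add: ncs_mult_def ncs_zero_def)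
lemma mult_zero_r[simp]: "ncs_mult f ncs_zero = ncs_zero"
  by (simp add: ncs_mult_def ncs_zero_def)
lemma mult_smult_l: "ncs_mult (ncs_smult a f) g = ncs_smult a (ncs_mult f g)"
  by (simp add: ncs_mult_def ncs_smult_def sum_distrib_left mult.assoc)

lemma mult_smult_r: "ncs_mult f (ncs_smult a g) = ncs_smult a (ncs_mult f g)"
  by (simp add: ncs_mult_def ncs_smult_def sum_distrib_left mult_ac)
lemma smult_smult: "ncs_smult a (ncs_smult b f) = ncs_smult (a*b) f"
  by (simp add: ncs_smult_def mult.assoc)

lemma hst_inner:
  "hst_mult (inv_s c) (hst_const h) i j =
     (if j = 0 then ncs_smult ((-c)^i) (ncs_mult (ncs_mono (replicate i L0)) h) else ncs_zero)"
proof
  fix w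
  have "hst_mult (inv_s c) (hst_const h) i j w = ncs_mult (inv_s c i j) (hst_const h (i-i) (j-j)) w"
    unfolding hst_mult_def
    by (rule dsum[where F="\<lambda>i' j'. ncs_mult (inv_s c i' j') (hst_const h (i - i') (j - j')) w"])
       (auto simp: hst_const_def; simp add: ncs_zero_def)
  then show "hst_mult (inv_s c) (hst_const h) i j w =
     (if j = 0 then ncs_smult ((-c)^i) (ncs_mult (ncs_mono (replicate i L0)) h) else ncs_zero) w"
    by (simp add: inv_s_def hst_const_def mult_smult_l)
qed

lemma hst_full:
  "hst_mult (hst_mult (inv_s c) (hst_const h)) (inv_t c) m n =
     ncs_smult ((-c)^m * (-c)^n) (ncs_mult (ncs_mult (ncs_mono (replicate m L0)) h) (ncs_mono (replicate n L0)))"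
proof
  fix w
  have "hst_mult (hst_mult (inv_s c) (hst_const h)) (inv_t c) m n w
      = ncs_mult (hst_mult (inv_s c) (hst_const h) m 0) (inv_t c (m-m) (n-0)) w"
    unfolding hst_mult_def[of "hst_mult (inv_s c) (hst_const h)" "inv_t c"]
    by (rule dsum2[where F="\<lambda>i' j'. ncs_mult (hst_mult (inv_s c) (hst_const h) i' j') (inv_t c (m - i') (n - j')) w"])
       (auto simp: hst_inner inv_t_def ncs_zero_def ncs_mult_def)
  also have "\<dots> = ncs_smult ((-c)^m * (-c)^n) (ncs_mult (ncs_mult (ncs_mono (replicate m L0)) h) (ncs_mono (replicate n L0))) w"
    by (simp add: hst_inner inv_t_def mult_smult_l mult_smult_r smult_smult mult.commute)
  finally show "hst_mult (hst_mult (inv_s c) (hst_const h)) (inv_t c) m n w =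
     ncs_smult ((-c)^m * (-c)^n) (ncs_mult (ncs_mult (ncs_mono (replicate m L0)) h) (ncs_mono (replicate n L0))) w" .
qed


lemma subst_fun: "ncs_subst \<Phi> SS = (\<lambda>w. ev \<Phi> (sig w))"
  by (rule ext) (rule subst_sig)

lemma lmul_single[simp]: "lmul [(a,u)] [(b,v)] = [(a*b, u@v)]"
  by (simp add: lmul_def)

lemma zst:
  "zeta_RS_st l m n = sgn_l l / (2 * pi * \<i>) * ((-1)^m * (-1)^n) *
      PhiRS (replicate m L0 @ L1 # omega l @ L1 # replicate n L0)"
  unfolding zeta_RS_st_def pair_st_def hst_full mono_toN mult_toN smult_toN pair_toN
  by (simp add: sgn_l_def)

theorem proposition5p4:
  fixes k :: "nat list"
  assumes "k \<noteq> []" and "is_index k"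
  shows "zeta_RS_star k =
    (\<lambda>m n. 1 / (2 * pi * \<i>) *
       pair_st (PhiRS_at Xinf (ncs_var L1))
         (hst_mult
            (hst_mult (inv_s (-1))
               (hst_const
                  (ncs_prod [ ncs_add (ncs_var L1) (ncs_smult (-1) (ncs_var L0)),
                              ncs_mono (omega k),
                              ncs_add (ncs_var L1) (ncs_smult (-1) (ncs_var L0)) ])))
            (inv_t (-1))) m n)"
proof (intro ext)
  fix m n
  obtain a ks where k: "k = a # ks" using assms(1) by (cases k) auto
  let ?W = "\<lambda>u. replicate m L0 @ L1 # u @ L1 # replicate n L0"
  have at: "PhiRS_at Xinf (ncs_var L1) = ncs_subst PhiRS SS"
    by (simp add: PhiRS_at_def SS_def)
  have d: "ncs_add (ncs_var L1) (ncs_smult (-1) (ncs_var L0)) = toN [(1,[L1]), (-1,[L0])]"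
    by (simp add: var_toN smult_toN add_toN)
  have "pair_st (PhiRS_at Xinf (ncs_var L1))
         (hst_mult
            (hst_mult (inv_s (-1))
               (hst_const
                  (ncs_prod [ ncs_add (ncs_var L1) (ncs_smult (-1) (ncs_var L0)),
                              ncs_mono (omega k),
                              ncs_add (ncs_var L1) (ncs_smult (-1) (ncs_var L0)) ])))
            (inv_t (-1))) m n
      = (-1)^m * (-1)^n * ev (\<lambda>u. PhiRS (?W u)) (sig (omega k))"
    unfolding pair_st_def hst_full at d ncs_prod_def
    unfolding foldr.simps o_def one_toN mono_toN mult_toN smult_toN pair_toN subst_fun
    by (simp add: mult_toN smult_toN pair_toN lmul_def ev_sig_append ev_sig_rep0 ev_add ev_diff ev_cmult ev_uminus algebra_simps)
  also have "\<dots> = (-1)^m * (-1)^n * sum_list (map (\<lambda>l. sgn_l l * PhiRS (?W (omega l))) (coarsenings k))"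
    using core[of a ks] assms(2) k by simp
  finally have R: "pair_st (PhiRS_at Xinf (ncs_var L1))
         (hst_mult
            (hst_mult (inv_s (-1))
               (hst_const
                  (ncs_prod [ ncs_add (ncs_var L1) (ncs_smult (-1) (ncs_var L0)),
                              ncs_mono (omega k),
                              ncs_add (ncs_var L1) (ncs_smult (-1) (ncs_var L0)) ])))
            (inv_t (-1))) m n
      = (-1)^m * (-1)^n * sum_list (map (\<lambda>l. sgn_l l * PhiRS (?W (omega l))) (coarsenings k))" .
  have "zeta_RS_star k m n = sum_list (map (\<lambda>l. 1 / (2 * pi * \<i>) * ((-1)^m * (-1)^n * (sgn_l l * PhiRS (?W (omega l))))) (coarsenings k))"
    unfolding zeta_RS_star_def zst by (simp add: algebra_simps)
  also have "\<dots> = 1 / (2 * pi * \<i>) * ((-1)^m * (-1)^n * sum_list (map (\<lambda>l. sgn_l l * PhiRS (?W (omega l))) (coarsenings k)))"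
    unfolding sum_list_const_mult ..
  finally show "zeta_RS_star k m n = 1 / (2 * pi * \<i>) *
       pair_st (PhiRS_at Xinf (ncs_var L1))
         (hst_mult
            (hst_mult (inv_s (-1))
               (hst_const
                  (ncs_prod [ ncs_add (ncs_var L1) (ncs_smult (-1) (ncs_var L0)),
                              ncs_mono (omega k),
                              ncs_add (ncs_var L1) (ncs_smult (-1) (ncs_var L0)) ])))
            (inv_t (-1))) m n"
    unfolding R .
qed

end
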